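(* Let $1\le p<\infty$ and for each positive integer $k$ let $Q_k=1-k+\dfrac{k^{1+1/p}}{(k+1)^{1/p}}$. Then $1-p^{-1}\le Q_k\le 2^{-1/p}$ for every positive integer $k$. *)

theory Defs
  imports Complex_Main
begin

end

theory Submission
  imports Defs "HOL-Analysis.Analysis"
begin

lemma lower_aux:
  fixes r x :: real
  assumes "0 \<le> r" "r \<le> 1" "0 \<le> x"
  shows "(1 + x) powr r \<le> 1 + r * x"
proof -
  have "(1+x) powr r * 1 powr (1 - r) \<le> r * (1+x) + (1 - r) * 1"
    using assms by (intro Youngs_inequality_0) auto
  thus ?thesis by (simp add: algebra_simps)
qed

lemma upper_aux:
  fixes r y :: real
  assumes "0 \<le> r" "1 \<le> y" "y \<le> 2"
  shows "y powr (-r) \<le> (2 - y) + (y - 1) * 2 powr (-r)"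
proof -
  define b where "b = ln y / ln 2"
  have b0: "0 \<le> b" using assms by (simp add: b_def)
  have b1: "b \<le> 1" using assms by (simp add: b_def)
  have lnc: "(2 - y) * ln 1 + (y - 1) * ln 2 \<le> ln ((2 - y) * 1 + (y - 1) * 2)"
    using concave_onD[OF ln_concave, of "y - 1" 1 2] assms by simp
  hence "y - 1 \<le> b" by (simp add: b_def field_simps)
  have "y powr (-r) = (2 powr (-r)) powr b"
    using assms by (simp add: b_def powr_powr powr_def)
  also have "\<dots> = 1 powr (1 - b) * (2 powr (-r)) powr b" by simp
  also have "\<dots> \<le> (1 - b) * 1 + b * 2 powr (-r)"
    using b0 b1 by (intro Youngs_inequality_0) auto
  also have "\<dots> = 1 - b * (1 - 2 powr (-r))" by (simp add: algebra_simps)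
  also have "\<dots> \<le> 1 - (y - 1) * (1 - 2 powr (-r))"
  proof -
    have "2 powr (-r) \<le> 2 powr 0" using assms by (intro powr_mono) auto
    thus ?thesis using \<open>y - 1 \<le> b\<close> assms by (intro diff_left_mono mult_right_mono) auto
  qed
  finally show ?thesis by (simp add: algebra_simps)
qed

theorem lemma5p8:
  fixes p :: real and k :: nat
  assumes "1 \<le> p" and "k \<ge> 1"
  shows "1 - 1 / p \<le> 1 - real k + real k powr (1 + 1 / p) / real (k + 1) powr (1 / p)
       \<and> 1 - real k + real k powr (1 + 1 / p) / real (k + 1) powr (1 / p) \<le> 2 powr (- 1 / p)"
proof -
  define r where "r = 1 / p"
  define K where "K = real k"
  have K1: "K \<ge> 1" using assms by (simp add: K_def)
  have r0: "0 \<le> r" "r \<le> 1" using assms by (auto simp: r_def)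
  define y where "y = (K + 1) / K"
  have y: "1 \<le> y" "y \<le> 2" using K1 by (auto simp: y_def field_simps)
  have eq: "real k powr (1 + 1 / p) / real (k + 1) powr (1 / p) = K * y powr (-r)"
    using K1 by (simp add: K_def r_def y_def powr_add powr_minus powr_divide field_simps)
  have L: "(1 + 1/K) powr r \<le> 1 + r * (1/K)"
    using lower_aux[OF r0, of "1/K"] K1 by simp
  have yK: "y = 1 + 1/K" using K1 by (simp add: y_def field_simps)
  have pos: "0 < y powr r" using y by simp
  have "y powr (-r) = 1 / y powr r" by (simp add: powr_minus divide_inverse)
  also have "\<dots> \<ge> 1 / (1 + r/K)" proof (rule divide_left_mono)
    show "y powr r \<le> 1 + r / K" using L yK by simp
    have "0 \<le> r / K" using r0 K1 by simp
    hence "0 < 1 + r / K" by simp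
    thus "0 < (1 + r / K) * y powr r" using pos by simp
  qed simp
  finally have A: "y powr (-r) \<ge> 1 / (1 + r/K)" .
  have Kp: "0 < K" using K1 by simp
  have rK: "0 \<le> r / K" using r0 K1 by simp
  have "(1 - r/K) * (1 + r/K) \<le> 1" by (simp add: algebra_simps)
  moreover have sp: "0 < 1 + r/K" using rK by simp
  ultimately have C: "1 - r/K \<le> 1 / (1 + r/K)" by (simp only: pos_le_divide_eq[OF sp])
  have "K * (1 - r/K) \<le> K * y powr (-r)" using C A Kp by (intro mult_left_mono) auto
  moreover have "K * (1 - r/K) = K - r" using Kp by (simp add: right_diff_distrib)
  ultimately have A2: "K - r \<le> K * y powr (-r)" by simp
  have B: "y powr (-r) \<le> (2 - y) + (y - 1) * 2 powr (-r)" using upper_aux[OF r0(1) y] .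
  have "K * y powr (-r) \<le> K * ((2 - y) + (y - 1) * 2 powr (-r))" using B Kp by simp
  also have "\<dots> = K * (2 - y) + (K * (y - 1)) * 2 powr (-r)" by (simp add: algebra_simps)
  also have "K * (2 - y) = K - 1" using Kp by (simp add: yK right_diff_distrib)
  also have "K * (y - 1) = 1" using Kp by (simp add: yK)
  finally have B2: "K * y powr (-r) \<le> K - 1 + 2 powr (-r)" by simp
  have m: "- 1 / p = - r" by (simp add: r_def)
  have r': "1 / p = r" by (simp add: r_def)
  show ?thesis unfolding m r' K_def[symmetric] using A2 B2 eq[unfolded r' K_def[symmetric]] by linarith
qed

end
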